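(* Let $S$ be an inverse semigroup. Then $S$ is a weak semilattice if and only if $\mathsf{D}(S)$ is a $\wedge$-semigroup.
   Context: For $X\subseteq S$ let $X^{\downarrow}=\{s\in S : s\le x \text{ for some } x\in X\}$ (natural partial order), and $a^{\downarrow}=\{a\}^{\downarrow}$. Elements $s,t$ are compatible if $s^{-1}t$ and $st^{-1}$ are idempotents. $\mathsf{D}(S)$ is the set of all subsets of $S$ of the form $\{a_1,\dots,a_m\}^{\downarrow}$ where $\{a_1,\dots,a_m\}$ is a finite (possibly empty) set of pairwise compatible elements of $S$; it is an inverse semigroup under subset multiplication, whose natural partial order is inclusion. $S$ is a weak semilattice if for all $a,b\in S$ the set $a^{\downarrow}\cap b^{\downarrow}$ equals $F^{\downarrow}$ for some finite subset $F\subseteq S$. An inverse semigroup is a $\wedge$-semigroup if every pair of elements has a meet with respect to the natural partial order. *)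

theory Defs
  imports Main
begin

definition inverse_semigroup :: "('a::semigroup_mult) itself \<Rightarrow> bool" where
  "inverse_semigroup _ \<longleftrightarrow> (\<forall>a::'a. \<exists>!b. a * b * a = a \<and> b * a * b = b)"

definition sinv :: "'a::semigroup_mult \<Rightarrow> 'a" where
  "sinv a = (THE b. a * b * a = a \<and> b * a * b = b)"

definition idem :: "'a::semigroup_mult \<Rightarrow> bool" where
  "idem e \<longleftrightarrow> e * e = e"

definition nat_le :: "'a::semigroup_mult \<Rightarrow> 'a \<Rightarrow> bool" where
  "nat_le s t \<longleftrightarrow> (\<exists>e. idem e \<and> s = e * t)"

definition down :: "'a::semigroup_mult set \<Rightarrow> 'a set" where
  "down X = {s. \<exists>x\<in>X. nat_le s x}"

definition compatible :: "'a::semigroup_mult \<Rightarrow> 'a \<Rightarrow> bool" where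
  "compatible s t \<longleftrightarrow> idem (sinv s * t) \<and> idem (s * sinv t)"

definition DS :: "'a::semigroup_mult itself \<Rightarrow> 'a set set" where
  "DS _ = {down A | A. finite A \<and> (\<forall>a\<in>A. \<forall>b\<in>A. compatible a b)}"

definition weak_semilattice :: "'a::semigroup_mult itself \<Rightarrow> bool" where
  "weak_semilattice _ \<longleftrightarrow>
     (\<forall>a b::'a. \<exists>F. finite F \<and> down {a} \<inter> down {b} = down F)"

definition set_mult :: "'a::semigroup_mult set \<Rightarrow> 'a set \<Rightarrow> 'a set" where
  "set_mult X Y = {x * y | x y. x \<in> X \<and> y \<in> Y}"

definition nat_le_on :: "'b set \<Rightarrow> ('b \<Rightarrow> 'b \<Rightarrow> 'b) \<Rightarrow> 'b \<Rightarrow> 'b \<Rightarrow> bool" where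
  "nat_le_on C m s t \<longleftrightarrow> (\<exists>e\<in>C. m e e = e \<and> s = m e t)"

definition wedge_semigroup_on :: "'b set \<Rightarrow> ('b \<Rightarrow> 'b \<Rightarrow> 'b) \<Rightarrow> bool" where
  "wedge_semigroup_on C m \<longleftrightarrow>
     (\<forall>x\<in>C. \<forall>y\<in>C. \<exists>z\<in>C. nat_le_on C m z x \<and> nat_le_on C m z y \<and>
        (\<forall>w\<in>C. nat_le_on C m w x \<and> nat_le_on C m w y \<longrightarrow> nat_le_on C m w z))"

end

theory Submission imports Defs begin

locale invs = assumes invsg: "inverse_semigroup TYPE('a::semigroup_mult)"
begin

lemma ex1: "\<exists>!b. (a::'a) * b * a = a \<and> b * a * b = b"
  using invsg unfolding inverse_semigroup_def by blast

lemma sinv1: "(a::'a) * sinv a * a = a" and sinv2: "sinv a * a * sinv a = sinv a"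
  using theI'[OF ex1[of a]] unfolding sinv_def by auto

lemma sinv_uniq: "(a::'a) * b * a = a \<Longrightarrow> b * a * b = b \<Longrightarrow> b = sinv a"
  unfolding sinv_def by (rule the1_equality[OF ex1, symmetric]) simp

lemma sinv1': "(a::'a) * (sinv a * a) = a" using sinv1 by (simp add: mult.assoc)
lemma sinv1'': "(a::'a) * (sinv a * (a * z)) = a * z"
proof - have "a * (sinv a * (a * z)) = (a * sinv a * a) * z" by (simp add: mult.assoc) then show ?thesis by (simp add: sinv1) qed
lemma sinv2': "sinv (a::'a) * (a * sinv a) = sinv a" using sinv2 by (simp add: mult.assoc)
lemma sinv2'': "sinv (a::'a) * (a * (sinv a * z)) = sinv a * z"
proof - have "sinv a * (a * (sinv a * z)) = (sinv a * a * sinv a) * z" by (simp add: mult.assoc) then show ?thesis by (simp add: sinv2) qed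

lemma idem_sinv: "idem (e::'a) \<Longrightarrow> sinv e = e"
  unfolding idem_def by (rule sinv_uniq[symmetric]) auto

lemma idem_commute:
  assumes e: "idem (e::'a)" and f: "idem f"
  shows "e * f = f * e"
proof -
  have ee: "e * e = e" and ff: "f * f = f" using e f by (auto simp: idem_def)
  have eez: "e * (e * z) = e * z" for z by (metis ee mult.assoc)
  have ffz: "f * (f * z) = f * z" for z by (metis ff mult.assoc)
  have gen: "idem (a * b)" if a: "a * a = a" and b: "b * b = b" for a b :: 'a
  proof -
    have aaz: "a * (a * z) = a * z" for z by (metis a mult.assoc)
    have bbz: "b * (b * z) = b * z" for z by (metis b mult.assoc)
    define x where "x = sinv (a * b)"
    have x1: "a * b * x * (a * b) = a * b" unfolding x_def by (rule sinv1)
    have x2: "x * (a * b) * x = x" unfolding x_def by (rule sinv2)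
    have "b * x * a = x"
      unfolding x_def
    proof (rule sinv_uniq)
      show "a * b * (b * sinv (a * b) * a) * (a * b) = a * b"
        using sinv1[of "a*b"] by (simp add: mult.assoc aaz bbz)
      show "b * sinv (a * b) * a * (a * b) * (b * sinv (a * b) * a) = b * sinv (a * b) * a"
        using sinv2''[of "a*b", simplified mult.assoc] by (simp add: mult.assoc aaz bbz)
    qed
    then have xx: "x * x = x"
      by (metis mult.assoc x2)
    have "x = sinv x" by (rule sinv_uniq) (simp_all add: xx mult.assoc)
    moreover have "a * b = sinv x"
      by (rule sinv_uniq) (use x1 x2 in \<open>simp_all add: mult.assoc\<close>)
    ultimately have "a * b = x" by simp
    then show ?thesis using xx by (simp add: idem_def)
  qed
  have ef: "idem (e*f)" and fe: "idem (f*e)" using gen ee ff by auto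
  have "f * e = sinv (e * f)"
    by (rule sinv_uniq) (use ef fe in \<open>simp_all add: idem_def mult.assoc eez ffz\<close>)
  also have "\<dots> = e * f" using idem_sinv[OF ef] .
  finally show ?thesis by simp
qed


lemma idem_mult: "idem (e::'a) \<Longrightarrow> idem f \<Longrightarrow> idem (e * f)"
proof -
  assume e: "idem e" and f: "idem f"
  have "e * f * (e * f) = e * (f * e) * f" by (simp add: mult.assoc)
  also have "\<dots> = e * (e * f) * f" by (subst idem_commute[OF f e]) (rule refl)
  also have "\<dots> = (e * e) * (f * f)" by (simp add: mult.assoc)
  also have "\<dots> = e * f" using e f unfolding idem_def by simp
  finally show ?thesis unfolding idem_def .
qed

lemma idem_aa: "idem ((a::'a) * sinv a)" and idem_aa': "idem (sinv a * a)"
proof -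
  have "a * sinv a * (a * sinv a) = (a * sinv a * a) * sinv a" by (simp only: mult.assoc)
  then show "idem (a * sinv a)" unfolding idem_def by (simp only: sinv1)
  have "sinv a * a * (sinv a * a) = (sinv a * a * sinv a) * a" by (simp only: mult.assoc)
  then show "idem (sinv a * a)" unfolding idem_def by (simp only: sinv2)
qed

lemma sinv_sinv: "sinv (sinv (a::'a)) = a"
  by (rule sinv_uniq[symmetric]) (simp_all add: sinv1 sinv2)

lemma sinv_mult: "sinv ((a::'a) * b) = sinv b * sinv a"
proof (rule sinv_uniq[symmetric])
  have c: "(b * sinv b) * (sinv a * a) = (sinv a * a) * (b * sinv b)"
    using idem_commute[OF idem_aa idem_aa'] .
  have "a * b * (sinv b * sinv a) * (a * b) = a * ((b * sinv b) * (sinv a * a)) * b"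
    by (simp add: mult.assoc)
  also have "\<dots> = (a * sinv a * a) * (b * sinv b * b)" unfolding c by (simp add: mult.assoc)
  finally show "a * b * (sinv b * sinv a) * (a * b) = a * b" by (simp add: sinv1)
  have "sinv b * sinv a * (a * b) * (sinv b * sinv a) = sinv b * ((sinv a * a) * (b * sinv b)) * sinv a"
    by (simp add: mult.assoc)
  also have "\<dots> = (sinv b * b * sinv b) * (sinv a * a * sinv a)" unfolding c[symmetric] by (simp add: mult.assoc)
  finally show "sinv b * sinv a * (a * b) * (sinv b * sinv a) = sinv b * sinv a" by (simp add: sinv2)
qed

lemma idem_ee: "idem (e::'a) \<Longrightarrow> e * e = e" by (simp add: idem_def)
lemma idem_eez: "idem (e::'a) \<Longrightarrow> e * (e * z) = e * z" by (simp add: idem_def mult.assoc[symmetric])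

lemma conjL: assumes "idem (e::'a)" shows "e * t = t * (sinv t * e * t)" and "idem (sinv t * e * t)"
proof -
  have c: "t * sinv t * e = e * (t * sinv t)" using idem_commute[OF idem_aa assms] .
  have "t * (sinv t * e * t) = (t * sinv t * e) * t" by (simp add: mult.assoc)
  also have "\<dots> = e * (t * sinv t * t)" unfolding c by (simp add: mult.assoc)
  finally show "e * t = t * (sinv t * e * t)" by (simp add: sinv1)
  have "sinv t * e * t * (sinv t * e * t) = sinv t * (e * (t * sinv t)) * e * t" by (simp add: mult.assoc)
  also have "\<dots> = sinv t * (t * sinv t) * (e * e) * t" unfolding c[symmetric] by (simp add: mult.assoc)
  also have "\<dots> = sinv t * e * t" using assms by (simp add: idem_def mult.assoc sinv2'')
  finally show "idem (sinv t * e * t)" by (simp add: idem_def)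
qed

lemma conjR: assumes "idem (g::'a)" shows "t * g = (t * g * sinv t) * t" and "idem (t * g * sinv t)"
proof -
  have c: "g * (sinv t * t) = sinv t * t * g" using idem_commute[OF assms idem_aa'] .
  have "(t * g * sinv t) * t = t * (g * (sinv t * t))" by (simp add: mult.assoc)
  also have "\<dots> = (t * sinv t * t) * g" unfolding c by (simp add: mult.assoc)
  finally show "t * g = (t * g * sinv t) * t" by (simp add: sinv1)
  have "t * g * sinv t * (t * g * sinv t) = t * (g * (sinv t * t)) * g * sinv t" by (simp add: mult.assoc)
  also have "\<dots> = t * (sinv t * t) * (g * g) * sinv t" unfolding c by (simp add: mult.assoc)
  also have "\<dots> = t * g * sinv t" using assms by (simp add: idem_def mult.assoc sinv1'')
  finally show "idem (t * g * sinv t)" by (simp add: idem_def)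
qed

lemma sinv_et: "idem (e::'a) \<Longrightarrow> sinv (e * t) = sinv t * e"
  by (simp only: sinv_mult idem_sinv)

lemma nat_le_aux: assumes e: "idem (e::'a)" shows "e * t = (e * t) * sinv (e * t) * t"
proof -
  have c: "t * sinv t * e = e * (t * sinv t)" using idem_commute[OF idem_aa e] .
  have "(e * t) * sinv (e * t) * t = e * (t * sinv t * e) * t" by (simp only: sinv_et[OF e] mult.assoc)
  also have "\<dots> = e * (e * (t * sinv t)) * t" by (simp only: c)
  also have "\<dots> = (e * e) * (t * sinv t * t)" by (simp only: mult.assoc)
  also have "\<dots> = e * t" by (simp only: idem_ee[OF e] sinv1)
  finally show ?thesis by (rule sym)
qed

lemma nat_le_iff: "nat_le (s::'a) t \<longleftrightarrow> s = s * sinv s * t"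
proof
  assume "nat_le s t"
  then obtain e where e: "idem e" "s = e * t" unfolding nat_le_def by blast
  then show "s = s * sinv s * t" using nat_le_aux[OF e(1), of t] by simp
next
  assume "s = s * sinv s * t" then show "nat_le s t" unfolding nat_le_def using idem_aa by blast
qed

lemma nat_le_right: "nat_le (s::'a) t \<longleftrightarrow> (\<exists>g. idem g \<and> s = t * g)"
proof
  assume "nat_le s t"
  then obtain e where e: "idem e" "s = e * t" unfolding nat_le_def by blast
  then show "\<exists>g. idem g \<and> s = t * g" using conjL[OF e(1), of t] by blast
next
  assume "\<exists>g. idem g \<and> s = t * g"
  then obtain g where g: "idem g" "s = t * g" by blast
  then show "nat_le s t" unfolding nat_le_def using conjR[OF g(1), of t] by blast
qed

lemma nat_le_refl: "nat_le (s::'a) s"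
  unfolding nat_le_def by (rule exI[of _ "s * sinv s"]) (simp add: idem_aa sinv1)

lemma nat_le_trans: "nat_le (s::'a) t \<Longrightarrow> nat_le t u \<Longrightarrow> nat_le s u"
proof -
  assume "nat_le s t" "nat_le t u"
  then obtain e f where "idem e" "s = e * t" "idem f" "t = f * u" unfolding nat_le_def by blast
  then have "idem (e * f) \<and> s = (e * f) * u" using idem_mult by (simp only: mult.assoc)
  then show ?thesis unfolding nat_le_def by blast
qed

lemma le_idem: "nat_le (s::'a) e \<Longrightarrow> idem e \<Longrightarrow> idem s"
  unfolding nat_le_def using idem_mult by blast

lemma idem_le: "idem (e::'a) \<Longrightarrow> nat_le (e * s) s"
  unfolding nat_le_def by blast

lemma le_dom: assumes "nat_le (s::'a) t" shows "nat_le (s * sinv s) (t * sinv t)"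
proof -
  obtain e where e: "idem e" "s = e * t" using assms unfolding nat_le_def by blast
  have c: "t * sinv t * e = e * (t * sinv t)" using idem_commute[OF idem_aa e(1)] .
  have "(e * t) * sinv (e * t) = e * (t * sinv t * e)" by (simp only: sinv_et[OF e(1)] mult.assoc)
  also have "\<dots> = e * (t * sinv t)" by (simp only: c idem_eez[OF e(1)])
  finally have "s * sinv s = e * (t * sinv t)" using e(2) by simp
  then show ?thesis unfolding nat_le_def using e(1) by blast
qed

lemma compatible_refl: "compatible (a::'a) a"
  unfolding compatible_def using idem_aa idem_aa' by blast

lemma compatible_idem: "idem (e::'a) \<Longrightarrow> idem f \<Longrightarrow> compatible e f"
  unfolding compatible_def by (simp add: idem_sinv idem_mult)

lemma compatible_le:
  assumes st: "nat_le (s::'a) s'" and tt: "nat_le t t'" and c: "compatible s' t'"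
  shows "compatible s t"
proof -
  obtain e where e: "idem e" "s = e * s'" using st unfolding nat_le_def by blast
  obtain g where g: "idem g" "t = t' * g" using tt unfolding nat_le_right by blast
  have c1: "idem (sinv s' * t')" and c2: "idem (s' * sinv t')" using c unfolding compatible_def by auto
  have "sinv s * t = (sinv s' * (e * t')) * g" using e g by (simp add: sinv_mult idem_sinv mult.assoc)
  also have "\<dots> = (sinv s' * t') * (sinv t' * e * t') * g" using conjL(1)[OF e(1), of t'] by (simp add: mult.assoc)
  finally have 1: "idem (sinv s * t)" using idem_mult[OF idem_mult[OF c1 conjL(2)[OF e(1)]] g(1)] by simp
  have "s * sinv t = e * (s' * g) * sinv t'" using e g by (simp add: sinv_mult idem_sinv mult.assoc)
  also have "\<dots> = e * (s' * g * sinv s') * (s' * sinv t')"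
    apply (subst conjR(1)[OF g(1), of s']) by (simp add: mult.assoc)
  finally have 2: "idem (s * sinv t)" using idem_mult[OF idem_mult[OF e(1) conjR(2)[OF g(1)]] c2] by simp
  show ?thesis unfolding compatible_def using 1 2 by blast
qed

lemma compatible_down:
  assumes "\<forall>a\<in>A. \<forall>b\<in>A. compatible (a::'a) b" "x \<in> down A" "y \<in> down A"
  shows "compatible x y"
  using assms compatible_le unfolding down_def by blast

lemma idem_from_prod:
  assumes comp: "\<And>u v. u \<in> E \<Longrightarrow> v \<in> E \<Longrightarrow> compatible (u::'a) v"
    and c: "c \<in> E" "x \<in> E" "y \<in> E" "c = x * y"
  shows "idem c"
proof -
  have eq: "sinv c = sinv c * x * (y * sinv c)" using sinv2[of c] c(4) by (simp add: mult.assoc)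
  have i1: "idem (sinv c * x)" using comp[OF c(1) c(2)] unfolding compatible_def by blast
  have i2: "idem (y * sinv c)" using comp[OF c(3) c(1)] unfolding compatible_def by blast
  have "idem (sinv c * x * (y * sinv c))" by (rule idem_mult[OF i1 i2])
  then have "idem (sinv c)" by (subst eq)
  then have "sinv (sinv c) = sinv c" by (rule idem_sinv)
  then have "c = sinv c" by (simp add: sinv_sinv)
  with \<open>idem (sinv c)\<close> show ?thesis by simp
qed


lemma DS_iff: "X \<in> DS TYPE('a) \<longleftrightarrow> (\<exists>A. X = down A \<and> finite A \<and> (\<forall>a\<in>A. \<forall>b\<in>A. compatible (a::'a) b))"
  unfolding DS_def by blast

lemma down_single_DS: "down {a::'a} \<in> DS TYPE('a)"
  unfolding DS_iff using compatible_refl by blast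

lemma sub_down: "A \<subseteq> down (A::'a set)"
  unfolding down_def using nat_le_refl by blast

lemma down_closed: "nat_le (z::'a) y \<Longrightarrow> y \<in> down A \<Longrightarrow> z \<in> down A"
  unfolding down_def using nat_le_trans by blast

lemma DS_compat: "X \<in> DS TYPE('a) \<Longrightarrow> x \<in> X \<Longrightarrow> y \<in> X \<Longrightarrow> compatible (x::'a) y"
  unfolding DS_iff using compatible_down by blast

lemma DS_closed: "X \<in> DS TYPE('a) \<Longrightarrow> nat_le (z::'a) y \<Longrightarrow> y \<in> X \<Longrightarrow> z \<in> X"
  unfolding DS_iff using down_closed by blast

lemma DS_idem_elems:
  assumes E: "E \<in> DS TYPE('a)" and EE: "set_mult E E = E" and e: "(e::'a) \<in> E"
  shows "idem e"
proof -
  from e EE obtain x y where "x \<in> E" "y \<in> E" "e = x * y" unfolding set_mult_def by blast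
  then show ?thesis using idem_from_prod[of E e x y] DS_compat[OF E] e by blast
qed

lemma le_imp_sub:
  assumes X: "X \<in> DS TYPE('a)" and Y: "Y \<in> DS TYPE('a)"
    and le: "nat_le_on (DS TYPE('a)) set_mult X Y"
  shows "X \<subseteq> Y"
proof
  fix x :: 'a assume x: "x \<in> X"
  from le obtain E where E: "E \<in> DS TYPE('a)" "set_mult E E = E" "X = set_mult E Y"
    unfolding nat_le_on_def by blast
  from x E(3) obtain e y where ey: "e \<in> E" "y \<in> Y" "x = e * y" unfolding set_mult_def by blast
  have "idem e" using DS_idem_elems[OF E(1) E(2) ey(1)] .
  then have "nat_le x y" using ey(3) idem_le by simp
  then show "x \<in> Y" using DS_closed[OF Y] ey(2) by blast
qed

lemma sub_imp_le:
  assumes X: "X \<in> DS TYPE('a)" and Y: "Y \<in> DS TYPE('a)" and sub: "X \<subseteq> Y"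
  shows "nat_le_on (DS TYPE('a)) set_mult X Y"
proof -
  obtain A where A: "X = down A" "finite A" "\<forall>a\<in>A. \<forall>b\<in>A. compatible (a::'a) b"
    using X unfolding DS_iff by blast
  define E where "E = down ((\<lambda>a. a * sinv a) ` A)"
  have Eidem: "idem e" if "e \<in> E" for e
    using that le_idem idem_aa unfolding E_def down_def by blast
  have EDS: "E \<in> DS TYPE('a)"
    unfolding DS_iff E_def using A(2) compatible_idem idem_aa by blast
  have EE: "set_mult E E = E"
  proof
    show "set_mult E E \<subseteq> E"
    proof
      fix z assume "z \<in> set_mult E E"
      then obtain e f where ef: "e \<in> E" "f \<in> E" "z = e * f" unfolding set_mult_def by blast
      then have "z = f * e" using idem_commute Eidem by blast
      then have "nat_le z e" using idem_le Eidem ef(2) by blast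
      then show "z \<in> E" using down_closed ef(1) unfolding E_def by blast
    qed
    show "E \<subseteq> set_mult E E"
    proof
      fix e assume "e \<in> E"
      then have "e = e * e" using Eidem by (simp add: idem_def)
      then show "e \<in> set_mult E E" using \<open>e \<in> E\<close> unfolding set_mult_def by blast
    qed
  qed
  have "X = set_mult E Y"
  proof
    show "X \<subseteq> set_mult E Y"
    proof
      fix x assume x: "x \<in> X"
      then obtain a where a: "a \<in> A" "nat_le x a" using A(1) unfolding down_def by blast
      have "nat_le (x * sinv x) (a * sinv a)" using le_dom[OF a(2)] .
      then have "x * sinv x \<in> E" unfolding E_def down_def using a(1) by blast
      moreover have "x = x * sinv x * x" by (simp add: sinv1)
      ultimately show "x \<in> set_mult E Y" using x sub unfolding set_mult_def by blast
    qed
    show "set_mult E Y \<subseteq> X"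
    proof
      fix z assume "z \<in> set_mult E Y"
      then obtain e y where ey: "e \<in> E" "y \<in> Y" "z = e * y" unfolding set_mult_def by blast
      then obtain a where a: "a \<in> A" "nat_le e (a * sinv a)" unfolding E_def down_def by blast
      have aY: "a \<in> Y" using a(1) sub sub_down A(1) by blast
      have comp: "compatible a y" using DS_compat[OF Y aY ey(2)] .
      have ie: "idem e" using Eidem ey(1) .
      obtain f where f: "idem f" "e = f * (a * sinv a)" using a(2) unfolding nat_le_def by blast
      have e2: "e * (a * sinv a) = e"
        using f idem_aa[of a] by (simp add: idem_def mult.assoc)
      have c1: "idem (sinv a * y)" and c2: "idem (a * sinv y)" using comp unfolding compatible_def by auto
      have ay: "sinv a * y = sinv y * a"
        using idem_sinv[OF c1] by (simp add: sinv_mult sinv_sinv)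
      have "z = e * (a * sinv a) * y" using e2 ey(3) by simp
      also have "\<dots> = e * a * (sinv a * y)" by (simp add: mult.assoc)
      also have "\<dots> = (e * (a * sinv y)) * a" unfolding ay by (simp add: mult.assoc)
      finally have "nat_le z a" unfolding nat_le_def using idem_mult[OF ie c2] by blast
      then show "z \<in> X" using A(1) a(1) unfolding down_def by blast
    qed
  qed
  then show ?thesis unfolding nat_le_on_def using EDS EE by blast
qed

lemma DS_le_iff: "X \<in> DS TYPE('a) \<Longrightarrow> Y \<in> DS TYPE('a) \<Longrightarrow>
   nat_le_on (DS TYPE('a)) set_mult X Y \<longleftrightarrow> X \<subseteq> Y"
  using le_imp_sub sub_imp_le by blast

lemma main: "weak_semilattice TYPE('a) \<longleftrightarrow> wedge_semigroup_on (DS TYPE('a)) set_mult"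
proof
  assume ws: "weak_semilattice TYPE('a)"
  then have "\<forall>a b::'a. \<exists>F. finite F \<and> down {a} \<inter> down {b} = down F"
    unfolding weak_semilattice_def by blast
  define Fn where "Fn a b = (SOME F. finite F \<and> down {a} \<inter> down {b} = down F)" for a b :: 'a
  have Fn: "finite (Fn a b) \<and> down {a} \<inter> down {b} = down (Fn a b)" for a b
    unfolding Fn_def by (rule someI_ex) (use \<open>\<forall>a b::'a. \<exists>F. _\<close> in blast)
  show "wedge_semigroup_on (DS TYPE('a)) set_mult"
    unfolding wedge_semigroup_on_def
  proof (intro ballI)
    fix X Y assume X: "X \<in> DS TYPE('a)" and Y: "Y \<in> DS TYPE('a)"
    obtain A where A: "X = down A" "finite A" "\<forall>a\<in>A. \<forall>b\<in>A. compatible (a::'a) b"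
      using X unfolding DS_iff by blast
    obtain B where B: "Y = down B" "finite B" "\<forall>a\<in>B. \<forall>b\<in>B. compatible (a::'a) b"
      using Y unfolding DS_iff by blast
    define G where "G = (\<Union>a\<in>A. \<Union>b\<in>B. Fn a b)"
    have memF: "s \<in> down (Fn a b) \<longleftrightarrow> nat_le s a \<and> nat_le s b" for s a b
      using Fn[of a b] unfolding down_def by blast
    have ZXY: "down G = X \<inter> Y"
    proof
      show "down G \<subseteq> X \<inter> Y"
      proof
        fix s assume "s \<in> down G"
        then obtain a b g where "a \<in> A" "b \<in> B" "g \<in> Fn a b" "nat_le s g"
          unfolding G_def down_def by blast
        then have "s \<in> down (Fn a b)" unfolding down_def by blast
        then show "s \<in> X \<inter> Y" using memF \<open>a \<in> A\<close> \<open>b \<in> B\<close> A(1) B(1) unfolding down_def by blast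
      qed
      show "X \<inter> Y \<subseteq> down G"
      proof
        fix s assume "s \<in> X \<inter> Y"
        then obtain a b where "a \<in> A" "b \<in> B" "nat_le s a" "nat_le s b"
          using A(1) B(1) unfolding down_def by blast
        then have "s \<in> down (Fn a b)" using memF by blast
        then show "s \<in> down G" unfolding G_def down_def using \<open>a \<in> A\<close> \<open>b \<in> B\<close> by blast
      qed
    qed
    have Gfin: "finite G" unfolding G_def using A(2) B(2) Fn by blast
    have Gsub: "G \<subseteq> X" using sub_down[of G] ZXY by blast
    have Gcomp: "\<forall>a\<in>G. \<forall>b\<in>G. compatible a b"
      using Gsub DS_compat[OF X] by blast
    have ZDS: "down G \<in> DS TYPE('a)" unfolding DS_iff using Gfin Gcomp by blast
    show "\<exists>z\<in>DS TYPE('a). nat_le_on (DS TYPE('a)) set_mult z X \<and> nat_le_on (DS TYPE('a)) set_mult z Y \<and>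
        (\<forall>w\<in>DS TYPE('a). nat_le_on (DS TYPE('a)) set_mult w X \<and> nat_le_on (DS TYPE('a)) set_mult w Y \<longrightarrow>
            nat_le_on (DS TYPE('a)) set_mult w z)"
    proof (rule bexI[OF _ ZDS], intro conjI ballI impI)
      show "nat_le_on (DS TYPE('a)) set_mult (down G) X" using DS_le_iff[OF ZDS X] ZXY by simp
      show "nat_le_on (DS TYPE('a)) set_mult (down G) Y" using DS_le_iff[OF ZDS Y] ZXY by simp
      fix W assume W: "W \<in> DS TYPE('a)"
        and h: "nat_le_on (DS TYPE('a)) set_mult W X \<and> nat_le_on (DS TYPE('a)) set_mult W Y"
      have "W \<subseteq> X" "W \<subseteq> Y" using h DS_le_iff[OF W X] DS_le_iff[OF W Y] by simp_all
      then show "nat_le_on (DS TYPE('a)) set_mult W (down G)" using DS_le_iff[OF W ZDS] ZXY by simp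
    qed
  qed
next
  assume w: "wedge_semigroup_on (DS TYPE('a)) set_mult"
  show "weak_semilattice TYPE('a)"
    unfolding weak_semilattice_def
  proof (intro allI)
    fix a b :: 'a
    have "\<exists>Z\<in>DS TYPE('a). nat_le_on (DS TYPE('a)) set_mult Z (down {a}) \<and> nat_le_on (DS TYPE('a)) set_mult Z (down {b}) \<and>
        (\<forall>W\<in>DS TYPE('a). nat_le_on (DS TYPE('a)) set_mult W (down {a}) \<and> nat_le_on (DS TYPE('a)) set_mult W (down {b}) \<longrightarrow>
            nat_le_on (DS TYPE('a)) set_mult W Z)"
      using w unfolding wedge_semigroup_on_def using down_single_DS[of a] down_single_DS[of b] by (elim ballE) auto
    then obtain Z where Z: "Z \<in> DS TYPE('a)" "nat_le_on (DS TYPE('a)) set_mult Z (down {a})"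
      "nat_le_on (DS TYPE('a)) set_mult Z (down {b})"
      "\<And>W. W \<in> DS TYPE('a) \<Longrightarrow> nat_le_on (DS TYPE('a)) set_mult W (down {a}) \<Longrightarrow>
          nat_le_on (DS TYPE('a)) set_mult W (down {b}) \<Longrightarrow> nat_le_on (DS TYPE('a)) set_mult W Z"
      by blast
    obtain F where F: "Z = down F" "finite F" using Z(1) unfolding DS_iff by blast
    have "down {a} \<inter> down {b} = Z"
    proof
      show "Z \<subseteq> down {a} \<inter> down {b}"
        using Z(2,3) DS_le_iff[OF Z(1) down_single_DS[of a]] DS_le_iff[OF Z(1) down_single_DS[of b]] by simp
      show "down {a} \<inter> down {b} \<subseteq> Z"
      proof
        fix s assume s: "s \<in> down {a} \<inter> down {b}"
        have "down {s} \<subseteq> down {a}" "down {s} \<subseteq> down {b}"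
          using s down_closed unfolding down_def by blast+
        then have "nat_le_on (DS TYPE('a)) set_mult (down {s}) (down {a})"
            "nat_le_on (DS TYPE('a)) set_mult (down {s}) (down {b})"
          using DS_le_iff[OF down_single_DS[of s] down_single_DS[of a]]
            DS_le_iff[OF down_single_DS[of s] down_single_DS[of b]] by simp_all
        then have "down {s} \<subseteq> Z"
          using Z(4)[OF down_single_DS[of s]] DS_le_iff[OF down_single_DS[of s] Z(1)] by simp
        then show "s \<in> Z" using sub_down[of "{s}"] by blast
      qed
    qed
    then show "\<exists>F. finite F \<and> down {a} \<inter> down {b} = down F" using F by blast
  qed
qed

end

theorem lemma1p16:
  assumes "inverse_semigroup TYPE('a::semigroup_mult)"
  shows "weak_semilattice TYPE('a) \<longleftrightarrow> wedge_semigroup_on (DS TYPE('a)) set_mult"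
  by (rule invs.main[OF invs.intro[OF assms]])

end
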